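(* Let $(x,y)$ be a Nash equilibrium (possibly mixed) of the input $2\times2$ game, where player 1 plays row 0 with probability $x$ and player 2 plays column 0 with probability $y$. Then for every initial state $|\psi_{\mathrm{in}}\rangle$, the profile $\tau_1=(x,1-x,0,0)$, $\tau_2=(y,1-y,0,0)$ (i.e. each player uses only the actions $C\times\mathds{1}$, $C\times\sigma_x$ with the equilibrium probabilities) is a Nash equilibrium of the eMW game, and it yields the same payoffs as $(x,y)$ in the input game.
   Context: Input game: $2\times2$ bimatrix game with payoff pairs $(a_{ij},b_{ij})$, $i,j\in\{0,1\}$ (player 1 chooses $i$, player 2 chooses $j$). $\sigma_x=\begin{pmatrix}0&1\\1&0\end{pmatrix}$. eMW game: each player has pure strategies $C\times\mathds{1},C\times\sigma_x,Q\times\mathds{1},Q\times\sigma_x$; mixed strategies $\tau_1=(p_1,\dots,p_4)$, $\tau_2=(q_1,\dots,q_4)$ in this order. With $\rho_{\mathrm{in}}=|\psi_{\mathrm{in}}\rangle\langle\psi_{\mathrm{in}}|$, $\rho_{00}=|00\rangle\langle00|$, the final state is $\rho_{\mathrm{ext}}=[(p_1q_1+p_1q_3+p_3q_1)\rho_{00}+p_3q_3\rho_{\mathrm{in}}]+(\mathds{1}\otimes\sigma_x)[(p_1q_2+p_1q_4+p_3q_2)\rho_{00}+p_3q_4\rho_{\mathrm{in}}](\mathds{1}\otimes\sigma_x)+(\sigma_x\otimes\mathds{1})[(p_2q_1+p_2q_3+p_4q_1)\rho_{00}+p_4q_3\rho_{\mathrm{in}}](\sigma_x\otimes\mathds{1})+(\sigma_x\otimes\sigma_x)[(p_2q_2+p_2q_4+p_4q_2)\rho_{00}+p_4q_4\rho_{\mathrm{in}}](\sigma_x\otimes\sigma_x)$,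 and the payoff pair is $\mathrm{tr}(X\rho_{\mathrm{ext}})$ with $X=\sum_{ij}(a_{ij},b_{ij})|ij\rangle\langle ij|$ (first component to player 1, second to player 2). Nash equilibrium is in the usual sense for mixed strategies. *)

theory Defs
  imports "Jordan_Normal_Form.Matrix"
begin

text \<open>Two-qubit Hilbert space C^4 with computational basis |ij>, i,j in {0,1},
  indexed by 2*i + j. Matrices are Jordan_Normal_Form matrices over complex.\<close>

definition sigma_x :: "complex mat" where
  "sigma_x = mat 2 2 (\<lambda>(i,j). if i \<noteq> j then 1 else 0)"

definition kron2 :: "complex mat \<Rightarrow> complex mat \<Rightarrow> complex mat" where
  "kron2 A B = mat 4 4 (\<lambda>(r,c). A $$ (r div 2, c div 2) * B $$ (r mod 2, c mod 2))"

definition ket_proj :: "nat \<Rightarrow> complex mat" where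
  "ket_proj k = mat 4 4 (\<lambda>(r,c). if r = k \<and> c = k then 1 else 0)"

definition rho00 :: "complex mat" where
  "rho00 = ket_proj 0"

definition proj_of :: "complex vec \<Rightarrow> complex mat" where
  "proj_of psi = mat 4 4 (\<lambda>(r,c). psi $ r * cnj (psi $ c))"

definition unit_state :: "complex vec \<Rightarrow> bool" where
  "unit_state psi \<longleftrightarrow> dim_vec psi = 4 \<and> (\<Sum>k<4. (cmod (psi $ k))\<^sup>2) = 1"

text \<open>Conjugation by a unitary U: U rho U^dagger (here all U are real symmetric involutions).\<close>
definition conjU :: "complex mat \<Rightarrow> complex mat \<Rightarrow> complex mat" where
  "conjU U R = U * R * U"

text \<open>Mixed strategies in the eMW game: p 0..p 3 are the probabilities of
  C x 1, C x sigma_x, Q x 1, Q x sigma_x (i.e. p_1..p_4 of the paper).\<close>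
definition mixed4 :: "(nat \<Rightarrow> real) \<Rightarrow> bool" where
  "mixed4 p \<longleftrightarrow> (\<forall>k<4. 0 \<le> p k) \<and> (\<Sum>k<4. p k) = 1"

definition rho_ext :: "complex mat \<Rightarrow> (nat \<Rightarrow> real) \<Rightarrow> (nat \<Rightarrow> real) \<Rightarrow> complex mat" where
  "rho_ext rin p q =
     (complex_of_real (p 0 * q 0 + p 0 * q 2 + p 2 * q 0) \<cdot>\<^sub>m rho00
        + complex_of_real (p 2 * q 2) \<cdot>\<^sub>m rin)
   + conjU (kron2 (1\<^sub>m 2) sigma_x)
       (complex_of_real (p 0 * q 1 + p 0 * q 3 + p 2 * q 1) \<cdot>\<^sub>m rho00
        + complex_of_real (p 2 * q 3) \<cdot>\<^sub>m rin)
   + conjU (kron2 sigma_x (1\<^sub>m 2))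
       (complex_of_real (p 1 * q 0 + p 1 * q 2 + p 3 * q 0) \<cdot>\<^sub>m rho00
        + complex_of_real (p 3 * q 2) \<cdot>\<^sub>m rin)
   + conjU (kron2 sigma_x sigma_x)
       (complex_of_real (p 1 * q 1 + p 1 * q 3 + p 3 * q 1) \<cdot>\<^sub>m rho00
        + complex_of_real (p 3 * q 3) \<cdot>\<^sub>m rin)"

definition mtrace :: "complex mat \<Rightarrow> complex" where
  "mtrace A = (\<Sum>i<dim_row A. A $$ (i,i))"

definition payoff_op :: "(nat \<Rightarrow> nat \<Rightarrow> real) \<Rightarrow> complex mat" where
  "payoff_op c = mat 4 4 (\<lambda>(r,s). if r = s then complex_of_real (c (r div 2) (r mod 2)) else 0)"

text \<open>Payoff tr(X rho); it is real since rho is Hermitian, we take the real part.\<close>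
definition emw_payoff :: "(nat \<Rightarrow> nat \<Rightarrow> real) \<Rightarrow> complex vec \<Rightarrow> (nat \<Rightarrow> real) \<Rightarrow> (nat \<Rightarrow> real) \<Rightarrow> real" where
  "emw_payoff c psi p q = Re (mtrace (payoff_op c * rho_ext (proj_of psi) p q))"

definition emw_nash :: "(nat \<Rightarrow> nat \<Rightarrow> real) \<Rightarrow> (nat \<Rightarrow> nat \<Rightarrow> real) \<Rightarrow> complex vec
                        \<Rightarrow> (nat \<Rightarrow> real) \<Rightarrow> (nat \<Rightarrow> real) \<Rightarrow> bool" where
  "emw_nash a b psi p q \<longleftrightarrow> mixed4 p \<and> mixed4 q \<and>
     (\<forall>p'. mixed4 p' \<longrightarrow> emw_payoff a psi p' q \<le> emw_payoff a psi p q) \<and>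
     (\<forall>q'. mixed4 q' \<longrightarrow> emw_payoff b psi p q' \<le> emw_payoff b psi p q)"

definition prob2 :: "real \<Rightarrow> nat \<Rightarrow> real" where
  "prob2 x i = (if i = 0 then x else 1 - x)"

definition input_payoff :: "(nat \<Rightarrow> nat \<Rightarrow> real) \<Rightarrow> real \<Rightarrow> real \<Rightarrow> real" where
  "input_payoff c x y = (\<Sum>i<2. \<Sum>j<2. prob2 x i * prob2 y j * c i j)"

definition input_nash :: "(nat \<Rightarrow> nat \<Rightarrow> real) \<Rightarrow> (nat \<Rightarrow> nat \<Rightarrow> real) \<Rightarrow> real \<Rightarrow> real \<Rightarrow> bool" where
  "input_nash a b x y \<longleftrightarrow> 0 \<le> x \<and> x \<le> 1 \<and> 0 \<le> y \<and> y \<le> 1 \<and>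
     (\<forall>x'. 0 \<le> x' \<and> x' \<le> 1 \<longrightarrow> input_payoff a x' y \<le> input_payoff a x y) \<and>
     (\<forall>y'. 0 \<le> y' \<and> y' \<le> 1 \<longrightarrow> input_payoff b x y' \<le> input_payoff b x y)"

definition classical_profile :: "real \<Rightarrow> nat \<Rightarrow> real" where
  "classical_profile x k = (if k = 0 then x else if k = 1 then 1 - x else 0)"

end

theory Submission
  imports Defs
begin

lemma perm_row:
  assumes U: "U \<in> carrier_mat 4 4" "(R::complex mat) \<in> carrier_mat 4 4"
   and Ue: "\<And>i j. i < 4 \<Longrightarrow> j < 4 \<Longrightarrow> U $$ (i,j) = (if j = f i then 1 else 0)"
   and f: "\<And>i. i < 4 \<Longrightarrow> f i < 4" "\<And>i. i < 4 \<Longrightarrow> f (f i) = i"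
   and i: "i < 4" and k: "k < 4"
  shows "(U * R) $$ (i,k) = R $$ (f i, k)"
proof -
  have "(U * R) $$ (i,k) = (\<Sum>j\<in>{0..<4}. U $$ (i,j) * R $$ (j,k))"
    using U i k by (simp add: scalar_prod_def row_def col_def)
  also have "\<dots> = (\<Sum>j\<in>{0..<4}. if j = f i then R $$ (j,k) else 0)"
    by (rule sum.cong) (auto simp: Ue i)
  also have "\<dots> = R $$ (f i, k)" using f i by simp
  finally show ?thesis .
qed
lemma perm_conj:
  assumes U: "U \<in> carrier_mat 4 4" "(R::complex mat) \<in> carrier_mat 4 4"
   and Ue: "\<And>i j. i < 4 \<Longrightarrow> j < 4 \<Longrightarrow> U $$ (i,j) = (if j = f i then 1 else 0)"
   and f: "\<And>i. i < 4 \<Longrightarrow> f i < 4" "\<And>i. i < 4 \<Longrightarrow> f (f i) = i"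
   and i: "i < 4"
  shows "conjU U R $$ (i,i) = R $$ (f i, f i)"
proof -
  have UR: "U * R \<in> carrier_mat 4 4" using U by auto
  have "conjU U R $$ (i,i) = (\<Sum>k\<in>{0..<4}. (U*R) $$ (i,k) * U $$ (k,i))"
    using U UR i unfolding conjU_def
    by (subst index_mult_mat(1)) (auto simp: scalar_prod_def)
  also have "\<dots> = (\<Sum>k\<in>{0..<4}. if k = f i then R $$ (f i, k) else 0)"
    apply (rule sum.cong, simp)
    using perm_row[OF U Ue f i] Ue f i by auto
  also have "\<dots> = R $$ (f i, f i)" using f i by simp
  finally show ?thesis .
qed
lemma less4: "(i::nat) < 4 \<Longrightarrow> i = 0 \<or> i = 1 \<or> i = 2 \<or> i = 3" by auto
lemma sum4: "(\<Sum>i<(4::nat). f i) = f 0 + f 1 + f 2 + (f 3::'a::comm_monoid_add)"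
  by (simp add: eval_nat_numeral add.assoc)
lemma sum2: "(\<Sum>i<(2::nat). f i) = f 0 + (f 1::'a::comm_monoid_add)"
  by (simp add: eval_nat_numeral)

definition f1 :: "nat \<Rightarrow> nat" where "f1 r = (if r = 0 then 1 else if r = 1 then 0 else if r = 2 then 3 else 2)"
definition f2 :: "nat \<Rightarrow> nat" where "f2 r = (if r = 0 then 2 else if r = 1 then 3 else if r = 2 then 0 else 1)"
definition f3 :: "nat \<Rightarrow> nat" where "f3 r = (if r = 0 then 3 else if r = 1 then 2 else if r = 2 then 1 else 0)"

lemma K1: "i < 4 \<Longrightarrow> j < 4 \<Longrightarrow> kron2 (1\<^sub>m 2) sigma_x $$ (i,j) = (if j = f1 i then 1 else 0)"
  by (drule less4, drule less4) (auto simp: kron2_def sigma_x_def f1_def)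
lemma K2: "i < 4 \<Longrightarrow> j < 4 \<Longrightarrow> kron2 sigma_x (1\<^sub>m 2) $$ (i,j) = (if j = f2 i then 1 else 0)"
  by (drule less4, drule less4) (auto simp: kron2_def sigma_x_def f2_def)
lemma K3: "i < 4 \<Longrightarrow> j < 4 \<Longrightarrow> kron2 sigma_x sigma_x $$ (i,j) = (if j = f3 i then 1 else 0)"
  by (drule less4, drule less4) (auto simp: kron2_def sigma_x_def f3_def)
lemma F: "i < 4 \<Longrightarrow> f1 i < 4" "i < 4 \<Longrightarrow> f1 (f1 i) = i"
  "i < 4 \<Longrightarrow> f2 i < 4" "i < 4 \<Longrightarrow> f2 (f2 i) = i"
  "i < 4 \<Longrightarrow> f3 i < 4" "i < 4 \<Longrightarrow> f3 (f3 i) = i"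
  by (auto simp: f1_def f2_def f3_def dest!: less4)
lemma kc: "kron2 A B \<in> carrier_mat 4 4" by (simp add: kron2_def)
lemma cc: "U \<in> carrier_mat 4 4 \<Longrightarrow> R \<in> carrier_mat 4 4 \<Longrightarrow> conjU U R \<in> carrier_mat 4 4"
  by (simp add: conjU_def)
lemma rc: "rho00 \<in> carrier_mat 4 4" by (simp add: rho00_def ket_proj_def)

lemma add_diag: "A \<in> carrier_mat 4 4 \<Longrightarrow> B \<in> carrier_mat 4 4 \<Longrightarrow> i < 4 \<Longrightarrow> (A+B)$$(i,i) = A$$(i,i)+B$$(i,i)"
  by simp
lemma add_c: "A \<in> carrier_mat 4 4 \<Longrightarrow> B \<in> carrier_mat 4 4 \<Longrightarrow> A + B \<in> carrier_mat 4 4"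
  by simp
lemma rho_diag:
  assumes rin: "rin \<in> carrier_mat 4 4" and i: "i < 4"
  shows "rho_ext rin p q $$ (i,i) =
     (complex_of_real (p 0 * q 0 + p 0 * q 2 + p 2 * q 0) * rho00 $$ (i,i) + complex_of_real (p 2 * q 2) * rin $$ (i,i))
   + (complex_of_real (p 0 * q 1 + p 0 * q 3 + p 2 * q 1) * rho00 $$ (f1 i, f1 i) + complex_of_real (p 2 * q 3) * rin $$ (f1 i, f1 i))
   + (complex_of_real (p 1 * q 0 + p 1 * q 2 + p 3 * q 0) * rho00 $$ (f2 i, f2 i) + complex_of_real (p 3 * q 2) * rin $$ (f2 i, f2 i))
   + (complex_of_real (p 1 * q 1 + p 1 * q 3 + p 3 * q 1) * rho00 $$ (f3 i, f3 i) + complex_of_real (p 3 * q 3) * rin $$ (f3 i, f3 i))"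
proof -
  let ?R = "\<lambda>u v. complex_of_real u \<cdot>\<^sub>m rho00 + complex_of_real v \<cdot>\<^sub>m rin"
  have RC: "\<And>u v. ?R u v \<in> carrier_mat 4 4" using rin rc by auto
  have Rd: "\<And>u v k. k < 4 \<Longrightarrow> ?R u v $$ (k,k) = complex_of_real u * rho00 $$ (k,k) + complex_of_real v * rin $$ (k,k)"
    using rin rc by auto
  have c1: "\<And>u v. conjU (kron2 (1\<^sub>m 2) sigma_x) (?R u v) $$ (i,i) = ?R u v $$ (f1 i, f1 i)"
    by (rule perm_conj[OF kc RC K1]) (auto simp: F i)
  have c2: "\<And>u v. conjU (kron2 sigma_x (1\<^sub>m 2)) (?R u v) $$ (i,i) = ?R u v $$ (f2 i, f2 i)"
    by (rule perm_conj[OF kc RC K2]) (auto simp: F i)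
  have c3: "\<And>u v. conjU (kron2 sigma_x sigma_x) (?R u v) $$ (i,i) = ?R u v $$ (f3 i, f3 i)"
    by (rule perm_conj[OF kc RC K3]) (auto simp: F i)
  have CC: "\<And>A B u v. conjU (kron2 A B) (?R u v) \<in> carrier_mat 4 4" using cc[OF kc RC] by blast
  show ?thesis unfolding rho_ext_def
    using i F[OF i] by (simp only: add_diag add_c RC CC c1 c2 c3 Rd)
qed
lemma rho_ext_c: "rin \<in> carrier_mat 4 4 \<Longrightarrow> rho_ext rin p q \<in> carrier_mat 4 4"
  unfolding rho_ext_def using rc by (auto intro!: add_c cc kc)

lemma trace_diag:
  assumes M: "M \<in> carrier_mat 4 4"
  shows "mtrace (payoff_op c * M) = (\<Sum>i<4. complex_of_real (c (i div 2) (i mod 2)) * M $$ (i,i))"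
proof -
  have "\<And>i. i < 4 \<Longrightarrow> (payoff_op c * M) $$ (i,i) = complex_of_real (c (i div 2) (i mod 2)) * M $$ (i,i)"
  proof -
    fix i :: nat assume i: "i < 4"
    have "(payoff_op c * M) $$ (i,i) = (\<Sum>j\<in>{0..<4}. payoff_op c $$ (i,j) * M $$ (j,i))"
      using M i by (simp add: payoff_op_def scalar_prod_def)
    also have "\<dots> = (\<Sum>j\<in>{0..<4}. if j = i then complex_of_real (c (i div 2) (i mod 2)) * M $$ (i,i) else 0)"
      by (rule sum.cong) (auto simp: payoff_op_def i)
    finally show "(payoff_op c * M) $$ (i,i) = complex_of_real (c (i div 2) (i mod 2)) * M $$ (i,i)"
      using i by simp
  qed
  then show ?thesis using M unfolding mtrace_def by (simp add: payoff_op_def)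
qed

lemma pc: "proj_of psi \<in> carrier_mat 4 4" by (simp add: proj_of_def)

lemma pay_gen:
  "emw_payoff c psi p q = (\<Sum>i<4. c (i div 2) (i mod 2) * Re (rho_ext (proj_of psi) p q $$ (i,i)))"
  unfolding emw_payoff_def using trace_diag[OF rho_ext_c[OF pc]] by (simp add: Re_sum)

lemma r00: "rho00 $$ (0,0) = 1" "rho00 $$ (1,1) = 0" "rho00 $$ (Suc 0,Suc 0) = 0" "rho00 $$ (2,2) = 0" "rho00 $$ (3,3) = 0"
  by (auto simp: rho00_def ket_proj_def)

lemma pay_q:
  assumes "q 2 = 0" "q 3 = 0"
  shows "emw_payoff c psi p q = (p 0 + p 2) * q 0 * c 0 0 + (p 0 + p 2) * q 1 * c 0 1
      + (p 1 + p 3) * q 0 * c 1 0 + (p 1 + p 3) * q 1 * c 1 1"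
  unfolding pay_gen sum4 using assms
  by (simp add: rho_diag[OF pc] f1_def f2_def f3_def r00 algebra_simps)

lemma pay_p:
  assumes "p 2 = 0" "p 3 = 0"
  shows "emw_payoff c psi p q = p 0 * (q 0 + q 2) * c 0 0 + p 0 * (q 1 + q 3) * c 0 1
      + p 1 * (q 0 + q 2) * c 1 0 + p 1 * (q 1 + q 3) * c 1 1"
  unfolding pay_gen sum4 using assms
  by (simp add: rho_diag[OF pc] f1_def f2_def f3_def r00 algebra_simps)
lemma ip: "input_payoff c x y = x * y * c 0 0 + x * (1-y) * c 0 1 + (1-x) * y * c 1 0 + (1-x)*(1-y) * c 1 1"
  by (simp add: input_payoff_def sum2 prob2_def)

theorem mainTheorem4:
  fixes a b :: "nat \<Rightarrow> nat \<Rightarrow> real" and x y :: real and psi :: "complex vec"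
  assumes "input_nash a b x y"
    and "unit_state psi"
  shows "emw_nash a b psi (classical_profile x) (classical_profile y)
       \<and> emw_payoff a psi (classical_profile x) (classical_profile y) = input_payoff a x y
       \<and> emw_payoff b psi (classical_profile x) (classical_profile y) = input_payoff b x y"
proof -
  have N: "0 \<le> x" "x \<le> 1" "0 \<le> y" "y \<le> 1"
    and A: "\<And>x'. 0 \<le> x' \<Longrightarrow> x' \<le> 1 \<Longrightarrow> input_payoff a x' y \<le> input_payoff a x y"
    and B: "\<And>y'. 0 \<le> y' \<Longrightarrow> y' \<le> 1 \<Longrightarrow> input_payoff b x y' \<le> input_payoff b x y"
    using assms(1) unfolding input_nash_def by auto
  let ?cx = "classical_profile x" and ?cy = "classical_profile y"
  have cx: "?cx 0 = x" "?cx 1 = 1 - x" "?cx 2 = 0" "?cx 3 = 0" by (auto simp: classical_profile_def)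
  have cy: "?cy 0 = y" "?cy 1 = 1 - y" "?cy 2 = 0" "?cy 3 = 0" by (auto simp: classical_profile_def)
  have Ea: "emw_payoff a psi ?cx ?cy = input_payoff a x y"
    by (simp only: pay_q[OF cy(3,4)] cx cy ip) simp
  have Eb: "emw_payoff b psi ?cx ?cy = input_payoff b x y"
    by (simp only: pay_q[OF cy(3,4)] cx cy ip) simp
  have m: "mixed4 ?cx" "mixed4 ?cy" using N
    by (auto simp: mixed4_def sum4 classical_profile_def)
  have D1: "emw_payoff a psi p' ?cy \<le> emw_payoff a psi ?cx ?cy" if p': "mixed4 p'" for p'
  proof -
    from p' have s: "p' 0 + p' 1 + p' 2 + p' 3 = 1" "p' 0 \<ge> 0" "p' 1 \<ge> 0" "p' 2 \<ge> 0" "p' 3 \<ge> 0"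
      unfolding mixed4_def sum4 by auto
    have e: "p' 1 + p' 3 = 1 - (p' 0 + p' 2)" using s by simp
    have "emw_payoff a psi p' ?cy = input_payoff a (p' 0 + p' 2) y"
      unfolding pay_q[OF cy(3,4)] cy ip e by (simp add: algebra_simps)
    also have "\<dots> \<le> input_payoff a x y" using s by (intro A) auto
    finally show ?thesis using Ea by simp
  qed
  have D2: "emw_payoff b psi ?cx q' \<le> emw_payoff b psi ?cx ?cy" if q': "mixed4 q'" for q'
  proof -
    from q' have s: "q' 0 + q' 1 + q' 2 + q' 3 = 1" "q' 0 \<ge> 0" "q' 1 \<ge> 0" "q' 2 \<ge> 0" "q' 3 \<ge> 0"
      unfolding mixed4_def sum4 by auto
    have e: "q' 1 + q' 3 = 1 - (q' 0 + q' 2)" using s by simp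
    have "emw_payoff b psi ?cx q' = input_payoff b x (q' 0 + q' 2)"
      unfolding pay_p[OF cx(3,4)] cx ip e by (simp add: algebra_simps)
    also have "\<dots> \<le> input_payoff b x y" using s by (intro B) auto
    finally show ?thesis using Eb by simp
  qed
  show ?thesis unfolding emw_nash_def using m D1 D2 Ea Eb by blast
qed
end
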